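(* There exist $c>0$ and $\tilde y>0$ such that for every $y>\tilde y$, $$\Big|\int_{-\infty}^{\infty}\big|\varphi_x(iy)-iy\big|^2\,dx-\min\Big\{1,\frac{\pi}{4y}\Big\}\Big|<\frac{c}{y^3}.$$
   Context: For $x\in\mathbb{R}$ and $z$ in the upper half plane $\mathbb{H}=\{z\in\mathbb{C}:\operatorname{Im} z>0\}$, $\varphi_x(z)=x+\sqrt{(z-x)^2-1}$, using the branch of the square root with positive imaginary part. *)

theory Defs
  imports "HOL-Analysis.Analysis"
begin

text \<open>The branch of the square root with positive imaginary part
  (well-defined for w not in [0, infinity)).\<close>
definition sqrt_upper :: "complex \<Rightarrow> complex" where
  "sqrt_upper w = (THE s. s^2 = w \<and> Im s > 0)"

definition phi :: "real \<Rightarrow> complex \<Rightarrow> complex" where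
  "phi x z = complex_of_real x + sqrt_upper ((z - complex_of_real x)^2 - 1)"

end

theory Submission
  imports Defs
begin

lemma sqrt_upper_prop:
  fixes w :: complex assumes wI: "Im w > 0"
  shows "(sqrt_upper (w^2-1))^2 = w^2 - 1 \<and> Im (sqrt_upper (w^2-1)) > 0"
proof -
  define t where "t = csqrt (w^2-1)"
  have t2: "t^2 = w^2-1" unfolding t_def by simp
  have tI: "Im t \<noteq> 0"
  proof
    assume h: "Im t = 0"
    have e: "w^2 = t^2 + 1" using t2 by (metis diff_add_cancel)
    have "Im (w^2) = Im (t^2)" unfolding e by simp
    hence "2 * Re w * Im w = 0" using h by (simp add: Im_power2)
    hence rw: "Re w = 0" using wI by simp
    have "Re (w^2) = Re (t^2) + 1" unfolding e by simp
    hence "- ((Im w)^2) = (Re t)^2 + 1" using rw h by (simp add: Re_power2)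
    moreover have "(Re t)^2 \<ge> 0" "(Im w)^2 \<ge> 0" by simp_all
    ultimately show False by linarith
  qed
  define s0 where "s0 = (if Im t > 0 then t else -t)"
  have s0: "s0^2 = w^2-1 \<and> Im s0 > 0"
  proof (cases "Im t > 0")
    case True thus ?thesis using t2 unfolding s0_def by simp
  next
    case False thus ?thesis using t2 tI unfolding s0_def by simp
  qed
  have uq: "s = s0" if "s^2 = w^2-1 \<and> Im s > 0" for s
  proof -
    have "s^2 = s0^2" using that s0 by simp
    hence "s = s0 \<or> s = -s0" by (simp add: power2_eq_iff)
    thus ?thesis using that s0 by auto
  qed
  have "sqrt_upper (w^2-1) = s0" unfolding sqrt_upper_def
    using the_equality[of "\<lambda>s. s^2 = w^2-1 \<and> Im s > 0", OF s0 uq] by simp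
  thus ?thesis using s0 by simp
qed

lemma real_part:
  fixes A B S r :: real
  assumes AB: "A*B = 1" and S: "A+B = S" and S1: "4*r-2 \<le> S" and S2: "S \<le> 4*r+2"
    and A1: "A > 1" and r: "r \<ge> 4"
  shows "\<bar>B - 1/(4*r)\<bar> \<le> 3/(8*r^2)"
proof -
  have B: "B = 1/A" using AB A1 by (simp add: field_simps)
  have B0: "0 < B" "B < 1" unfolding B using A1 by auto
  have Alo: "A \<ge> 4*r-3" and Ahi: "A \<le> 4*r+2" using S S1 S2 B0 by linarith+
  have "B - 1/(4*r) = (4*r - A)/(4*r*A)" using B A1 r by (simp add: field_simps)
  hence "\<bar>B - 1/(4*r)\<bar> = \<bar>4*r - A\<bar>/(4*r*A)" using A1 r by simp
  also have "\<dots> \<le> 3/(4*r*A)" using Alo Ahi A1 r by (intro divide_right_mono) auto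
  also have "\<dots> \<le> 3/(8*r^2)"
  proof (rule divide_left_mono)
    have "4*r*A \<ge> 4*r*(2*r)" using Alo r by (intro mult_left_mono) auto
    thus "8*r^2 \<le> 4*r*A" by (simp add: power2_eq_square)
  qed (use r A1 in \<open>auto intro!: mult_pos_pos\<close>)
  finally show ?thesis .
qed

lemma sqrt_part:
  fixes A B S :: real
  assumes AB: "A*B = 1" and S: "A+B = S" and A1: "A \<ge> B"
  shows "B = (S - sqrt (S^2-4))/2"
proof -
  have "S^2 - 4 = (A-B)^2" unfolding S[symmetric] using AB by (simp add: power2_eq_square algebra_simps)
  hence "sqrt (S^2-4) = A - B" using A1 by simp
  thus ?thesis using S by simp
qed

lemma complex_part:
  fixes w s :: complex
  assumes s2: "s^2 = w^2 - 1" and sI: "Im s > 0" and wI: "Im w > 1"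
  shows "(cmod (s-w))^2 * (cmod (s+w))^2 = 1"
    "(cmod (s-w))^2 + (cmod (s+w))^2 = 2*cmod (w^2-1) + 2*(cmod w)^2"
    "(cmod (s+w))^2 > 1"
proof -
  have "(s-w)*(s+w) = -1" using s2 by (simp add: power2_eq_square algebra_simps)
  hence "cmod (s-w) * cmod (s+w) = 1" by (metis norm_minus_cancel norm_mult norm_one)
  thus "(cmod (s-w))^2 * (cmod (s+w))^2 = 1" by (metis power_mult_distrib power_one)
  have "cmod (w^2-1) = (cmod s)^2" using s2 by (metis norm_power)
  moreover have "(cmod (s-w))^2 + (cmod (s+w))^2 = 2*(cmod s)^2 + 2*(cmod w)^2"
    unfolding cmod_power2 by (simp add: power2_eq_square algebra_simps)
  ultimately show "(cmod (s-w))^2 + (cmod (s+w))^2 = 2*cmod (w^2-1) + 2*(cmod w)^2" by simp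
  have "Im (s+w) > 1" using sI wI by simp
  hence "cmod (s+w) > 1" using abs_Im_le_cmod[of "s+w"] by linarith
  thus "(cmod (s+w))^2 > 1" by (metis less_1_mult power2_eq_square)
qed

lemma q_bounds:
  fixes w :: complex
  shows "(cmod w)^2 - 1 \<le> cmod (w^2-1)" "cmod (w^2-1) \<le> (cmod w)^2 + 1"
proof -
  have "cmod (w^2) - cmod (1::complex) \<le> cmod (w^2-1)" by (rule norm_triangle_ineq2)
  thus "(cmod w)^2 - 1 \<le> cmod (w^2-1)" by (simp add: norm_power)
  have "cmod (w^2-1) \<le> cmod (w^2) + cmod (1::complex)" by (rule norm_triangle_ineq4)
  thus "cmod (w^2-1) \<le> (cmod w)^2 + 1" by (simp add: norm_power)
qed

lemma base_int:
  fixes y :: real assumes y: "y > 0"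
  shows "integrable lborel (\<lambda>x. 1/(x^2+y^2))" "(\<integral>x. 1/(x^2+y^2) \<partial>lborel) = pi / y"
proof -
  have D: "DERIV (\<lambda>x. arctan (x/y)/y) x :> 1/(x^2+y^2)" for x
  proof -
    have p: "x * (x * (y * y)) + y * (y * (y * y)) > 0" using y
      by (intro add_nonneg_pos) (auto simp: mult.assoc[symmetric])
    show ?thesis using y p by (auto intro!: derivative_eq_intros simp: field_simps power2_eq_square)
  qed
  have T1: "filterlim (\<lambda>x. inverse y * x) at_top at_top"
    using y by (intro filterlim_tendsto_pos_mult_at_top[OF tendsto_const _ filterlim_ident]) auto
  have T2: "filterlim (\<lambda>x. inverse y * x) at_bot at_bot"
    using y by (intro filterlim_tendsto_pos_mult_at_bot[OF tendsto_const _ filterlim_ident]) auto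
  have L1: "((\<lambda>x. arctan (x/y)/y) \<longlongrightarrow> (pi/2)/y) at_top"
    using T1 y by (intro tendsto_intros filterlim_compose[OF tendsto_arctan_at_top]) (auto simp: divide_inverse mult.commute)
  have L2: "((\<lambda>x. arctan (x/y)/y) \<longlongrightarrow> (-(pi/2))/y) at_bot"
    using T2 y by (intro tendsto_intros filterlim_compose[OF tendsto_arctan_at_bot]) (auto simp: divide_inverse mult.commute)
  note R = interval_integral_FTC_nonneg[where a="-\<infinity>" and b="\<infinity>" and F="\<lambda>x. arctan (x/y)/y"
     and f="\<lambda>x. 1/(x^2+y^2)" and A="(-(pi/2))/y" and B="(pi/2)/y"]
  have H: "set_integrable lborel (einterval (-\<infinity>) \<infinity>) (\<lambda>x. 1/(x^2+y^2))"
     "(LBINT x=-\<infinity>..\<infinity>. 1/(x^2+y^2)) = (pi/2)/y - (-(pi/2))/y"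
    by (rule R; use D L1 L2 y in \<open>auto simp: ereal_tendsto_simps add_pos_pos\<close>)+
  show "integrable lborel (\<lambda>x. 1/(x^2+y^2))" using H(1) by (simp add: set_integrable_def einterval_eq_UNIV)
  show "(\<integral>x. 1/(x^2+y^2) \<partial>lborel) = pi / y" using H(2)
    by (simp add: interval_lebesgue_integral_def set_lebesgue_integral_def einterval_eq_UNIV)
qed


lemma pointwise:
  fixes x y :: real assumes y: "y \<ge> 2"
  shows "(cmod (phi x (\<i> * complex_of_real y) - \<i> * complex_of_real y))^2
     = (2*cmod ((\<i> * complex_of_real y - complex_of_real x)^2-1) + 2*(x^2+y^2)
        - sqrt ((2*cmod ((\<i> * complex_of_real y - complex_of_real x)^2-1) + 2*(x^2+y^2))^2-4))/2"
    "\<bar>(cmod (phi x (\<i> * complex_of_real y) - \<i> * complex_of_real y))^2 - 1/(4*(x^2+y^2))\<bar>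
      \<le> 3/(8*y^2*(x^2+y^2))"
proof -
  define w where "w = \<i> * complex_of_real y - complex_of_real x"
  define s where "s = sqrt_upper (w^2-1)"
  have wI: "Im w = y" and wR: "Re w = -x" unfolding w_def by simp_all
  have sp: "s^2 = w^2-1" "Im s > 0" using sqrt_upper_prop[of w] wI y unfolding s_def by auto
  have eq: "phi x (\<i> * complex_of_real y) - \<i> * complex_of_real y = s - w"
    unfolding phi_def s_def w_def by simp
  have r: "(cmod w)^2 = x^2+y^2" unfolding cmod_power2 wI wR by simp
  have wI1: "Im w > 1" using wI y by simp
  note cp = complex_part[OF sp wI1]
  define A where "A = (cmod (s+w))^2"
  define B where "B = (cmod (s-w))^2"
  define S where "S = 2*cmod (w^2-1) + 2*(x^2+y^2)"
  have AB: "A*B = 1" using cp(1) unfolding A_def B_def by (simp add: mult.commute)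
  have ApB: "A+B = S" using cp(2) r unfolding A_def B_def S_def by simp
  have A1: "A > 1" using cp(3) unfolding A_def .
  have qb: "x^2+y^2 - 1 \<le> cmod (w^2-1)" "cmod (w^2-1) \<le> x^2+y^2 + 1"
    using q_bounds[of w] r by simp_all
  have y4: "y^2 \<ge> 4" using power_mono[OF y, of 2] by simp
  have rge: "x^2+y^2 \<ge> y^2" by simp
  have r4: "x^2+y^2 \<ge> 4" using y4 rge by linarith
  have BA: "B \<le> A"
  proof -
    have "B = 1/A" using AB A1 by (simp add: field_simps)
    moreover have "1/A < 1" using A1 by simp
    ultimately show ?thesis using A1 by linarith
  qed
  show "(cmod (phi x (\<i> * complex_of_real y) - \<i> * complex_of_real y))^2
     = (2*cmod ((\<i> * complex_of_real y - complex_of_real x)^2-1) + 2*(x^2+y^2)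
        - sqrt ((2*cmod ((\<i> * complex_of_real y - complex_of_real x)^2-1) + 2*(x^2+y^2))^2-4))/2"
    using sqrt_part[OF AB ApB BA] unfolding eq B_def S_def w_def .
  have "\<bar>B - 1/(4*(x^2+y^2))\<bar> \<le> 3/(8*(x^2+y^2)^2)"
    by (rule real_part[OF AB ApB]) (use qb A1 r4 S_def in auto)
  also have "\<dots> \<le> 3/(8*y^2*(x^2+y^2))"
  proof (rule divide_left_mono)
    have h: "y^2*(x^2+y^2) \<le> (x^2+y^2)*(x^2+y^2)" using rge r4 by (intro mult_right_mono) auto
    show "8*y^2*(x^2+y^2) \<le> 8*(x^2+y^2)^2" using h unfolding power2_eq_square[of "x^2+y^2"] by linarith
  qed (use y4 r4 in \<open>auto intro!: mult_pos_pos\<close>)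
  finally show "\<bar>(cmod (phi x (\<i> * complex_of_real y) - \<i> * complex_of_real y))^2 - 1/(4*(x^2+y^2))\<bar>
      \<le> 3/(8*y^2*(x^2+y^2))" unfolding eq B_def .
qed

theorem lemmaA1:
  shows "\<exists>c>0. \<exists>y0>0. \<forall>y::real. y > y0 \<longrightarrow>
    \<bar>(\<integral>x. (cmod (phi x (\<i> * complex_of_real y) - \<i> * complex_of_real y))^2 \<partial>lborel)
      - min 1 (pi / (4 * y))\<bar> < c / y^3"
proof (intro exI[of _ 2] conjI exI[of _ 2] allI impI)
  fix y :: real assume y: "y > 2"
  hence y2: "y \<ge> 2" and y0: "y > 0" by simp_all
  define f where "f = (\<lambda>x. (cmod (phi x (\<i> * complex_of_real y) - \<i> * complex_of_real y))^2)"
  define g where "g = (\<lambda>x::real. (2*cmod ((\<i> * complex_of_real y - complex_of_real x)^2-1) + 2*(x^2+y^2)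
        - sqrt ((2*cmod ((\<i> * complex_of_real y - complex_of_real x)^2-1) + 2*(x^2+y^2))^2-4))/2)"
  define b where "b = (\<lambda>x::real. 1/(x^2+y^2))"
  define F where "F = (\<lambda>x. (1/4) * b x)"
  define E where "E = (\<lambda>x. (3/(8*y^2)) * b x)"
  have fg: "f = g" unfolding f_def g_def using pointwise(1)[OF y2] by (intro ext) simp
  have fb: "\<bar>f x - F x\<bar> \<le> E x" for x
    using pointwise(2)[OF y2, of x] unfolding f_def F_def E_def b_def by simp
  have bi: "integrable lborel b" "integral\<^sup>L lborel b = pi / y"
    using base_int[OF y0] unfolding b_def by simp_all
  have Fi: "integrable lborel F" and Ei: "integrable lborel E"
    unfolding F_def E_def using bi(1) by simp_all
  have gm: "g \<in> borel_measurable lborel" unfolding g_def by measurable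
  have fi: "integrable lborel f"
  proof (rule Bochner_Integration.integrable_bound[of _ "\<lambda>x. F x + E x"])
    show "integrable lborel (\<lambda>x. F x + E x)" using Fi Ei by simp
    show "f \<in> borel_measurable lborel" using gm fg by simp
    show "AE x in lborel. norm (f x) \<le> norm (F x + E x)"
    proof (rule AE_I2)
      fix x
      have "f x \<ge> 0" unfolding f_def by simp
      moreover have "F x \<ge> 0" "E x \<ge> 0" unfolding F_def E_def b_def by (simp_all add: add_nonneg_nonneg)
      ultimately show "norm (f x) \<le> norm (F x + E x)" using fb[of x] by simp
    qed
  qed
  have IF: "integral\<^sup>L lborel F = pi/(4*y)" unfolding F_def using bi by simp
  have IE: "integral\<^sup>L lborel E = 3*pi/(8*y^3)" unfolding E_def using bi y0
    by (simp add: power2_eq_square power3_eq_cube)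
  have mn: "min 1 (pi/(4*y)) = pi/(4*y)"
  proof -
    have "pi/(4*y) \<le> 4/(4*2)" using y pi_less_4 by (intro frac_le) auto
    thus ?thesis by simp
  qed
  have "integral\<^sup>L lborel f - min 1 (pi/(4*y)) = integral\<^sup>L lborel (\<lambda>x. f x - F x)"
    using fi Fi IF mn by simp
  hence "\<bar>integral\<^sup>L lborel f - min 1 (pi/(4*y))\<bar> \<le> integral\<^sup>L lborel (\<lambda>x. norm (f x - F x))"
    using integral_norm_bound[of lborel "\<lambda>x. f x - F x"] by simp
  also have "\<dots> \<le> integral\<^sup>L lborel E"
    using fb fi Fi Ei by (intro integral_mono) auto
  also have "\<dots> < 2 / y^3"
  proof -
    have "3*pi < 16" using pi_less_4 by simp
    hence "3*pi/(8*y^3) < 16/(8*y^3)" using y0 by (intro divide_strict_right_mono) auto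
    thus ?thesis using IE by simp
  qed
  finally show "\<bar>(\<integral>x. (cmod (phi x (\<i> * complex_of_real y) - \<i> * complex_of_real y))^2 \<partial>lborel)
      - min 1 (pi / (4 * y))\<bar> < 2 / y^3" unfolding f_def .
qed (simp_all)

end
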